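(* Let $n\ge p$ and $l\ge 1$ be integers and let $\mathrm{St}(n,p,l)=\{\mathcal X\in\mathbb R^{n\times p\times l}:\mathcal X^\top*\mathcal X=\mathcal I\}$. Then $\mathrm{St}(n,p,l)$ is an embedded submanifold of $\mathbb R^{n\times p\times l}$ of dimension $$\dim \mathrm{St}(n,p,l)=p\Big(nl-\frac{pl}{2}-\frac{1}{2^{|\sin(l\pi/2)|}}\Big).$$
   Context: For $\mathcal A\in\mathbb R^{n\times p\times l}$, $A^{(i)}=\mathcal A(:,:,i)$ ($i=1,\dots,l$) are its frontal slices. $\operatorname{bcirc}(\mathcal A)\in\mathbb R^{nl\times pl}$ is the block circulant matrix whose $(i,j)$ block is $A^{(((i-j)\bmod l)+1)}$; $\operatorname{unfold}(\mathcal A)\in\mathbb R^{nl\times p}$ stacks $A^{(1)},\dots,A^{(l)}$ vertically and $\operatorname{fold}$ is its inverse. The t-product of $\mathcal A\in\mathbb R^{n\times p\times l}$ and $\mathcal B\in\mathbb R^{p\times m\times l}$ is $\mathcal A*\mathcal B=\operatorname{fold}(\operatorname{bcirc}(\mathcal A)\operatorname{unfold}(\mathcal B))\in\mathbb R^{n\times m\times l}$. The transpose $\mathcal A^\top\in\mathbb R^{p\times n\times l}$ has frontal slices $(A^{(1)})^\top,(A^{(l)})^\top,(A^{(l-1)})^\top,\dots,(A^{(2)})^\top$ (in this order). The identity tensor $\mathcal I\in\mathbb R^{p\times p\times l}$ has first frontal slice $I_p$ and all other frontal slices zero. *)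

theory Defs
  imports "HOL-Analysis.Analysis"
begin

fun Ck_on :: "nat \<Rightarrow> 'a::euclidean_space set \<Rightarrow> ('a \<Rightarrow> 'b::euclidean_space) \<Rightarrow> bool" where
  "Ck_on 0 U f = continuous_on U f"
| "Ck_on (Suc k) U f =
     (\<exists>f'. (\<forall>x\<in>U. (f has_derivative f' x) (at x)) \<and> (\<forall>v\<in>Basis. Ck_on k U (\<lambda>x. f' x v)))"

definition smooth_on :: "'a::euclidean_space set \<Rightarrow> ('a \<Rightarrow> 'b::euclidean_space) \<Rightarrow> bool" where
  "smooth_on U f \<longleftrightarrow> (\<forall>k. Ck_on k U f)"

definition embedded_submanifold :: "'a::euclidean_space set \<Rightarrow> nat \<Rightarrow> bool" where
  "embedded_submanifold S d \<longleftrightarrow>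
     (\<forall>x\<in>S. \<exists>U V (\<phi>::'a \<Rightarrow> 'a) \<psi> E.
        open U \<and> x \<in> U \<and> open V \<and> subspace E \<and> dim E = d \<and>
        smooth_on U \<phi> \<and> smooth_on V \<psi> \<and> \<phi> ` U = V \<and>
        (\<forall>y\<in>U. \<psi> (\<phi> y) = y) \<and> (\<forall>z\<in>V. \<phi> (\<psi> z) = z) \<and>
        \<phi> ` (S \<inter> U) = V \<inter> E)"

text \<open>A tensor in R^(n x p x l) is a vector indexed by 'n x 'p x 'l, where
  n = CARD('n), p = CARD('p), l = CARD('l).  The frontal slices are ordered by the
  canonical enumeration of 'l: the (i+1)-th frontal slice (0-based i < l) is the one
  with third index slice_idx i.\<close>

definition slice_idx :: "nat \<Rightarrow> 'l::enum" where
  "slice_idx i = (Enum.enum :: 'l list) ! i"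

definition slice_pos :: "'l::enum \<Rightarrow> nat" where
  "slice_pos k = (THE i. i < CARD('l) \<and> slice_idx i = k)"

type_synonym ('n, 'p, 'l) tensor = "real ^ ('n \<times> 'p \<times> 'l)"

text \<open>t-product: the i-th frontal slice of A * B is block row i of bcirc(A) times unfold(B),
  i.e. sum over j of A^(((i-j) mod l)+1) B^(j) (here 0-based).\<close>
definition tprod :: "('n::finite, 'p::finite, 'l::enum) tensor \<Rightarrow> ('p, 'm::finite, 'l) tensor
                      \<Rightarrow> ('n, 'm, 'l) tensor" where
  "tprod A B = (\<chi> x. case x of (a, b, k) \<Rightarrow>
     (\<Sum>j<CARD('l). \<Sum>c\<in>UNIV.
        A $ (a, c, slice_idx ((slice_pos k + CARD('l) - j) mod CARD('l))) * B $ (c, b, slice_idx j)))"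

text \<open>Transpose: slices (A^(1))^T, (A^(l))^T, ..., (A^(2))^T, i.e. slice i (0-based)
  is the transpose of slice (l - i) mod l.\<close>
definition ttrans :: "('n::finite, 'p::finite, 'l::enum) tensor \<Rightarrow> ('p, 'n, 'l) tensor" where
  "ttrans A = (\<chi> x. case x of (b, a, k) \<Rightarrow>
     A $ (a, b, slice_idx ((CARD('l) - slice_pos k) mod CARD('l))))"

definition tident :: "('p::finite, 'p, 'l::enum) tensor" where
  "tident = (\<chi> x. case x of (a, b, k) \<Rightarrow> (if slice_pos k = 0 \<and> a = b then 1 else 0))"

definition tStiefel :: "('n::finite, 'p::finite, 'l::enum) tensor set" where
  "tStiefel = {X. tprod (ttrans X) X = tident}"

end

theory Submission
  imports Defs
begin


lemma Ck_on_subset: "Ck_on k U f \<Longrightarrow> V \<subseteq> U \<Longrightarrow> Ck_on k V f"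
proof (induction k arbitrary: f)
  case 0 then show ?case by (auto intro: continuous_on_subset)
next
  case (Suc k) then show ?case by (auto 4 3)
qed

lemma Ck_on_Suc_imp: "Ck_on (Suc k) U f \<Longrightarrow> Ck_on k U f"
proof (induction k arbitrary: f)
  case 0
  then show ?case
    by (auto intro!: continuous_at_imp_continuous_on dest: has_derivative_continuous)
next
  case (Suc k)
  then show ?case by (metis Ck_on.simps(2))
qed


lemma Ck_on_const: "Ck_on k U (\<lambda>x. c)"
proof (induction k arbitrary: c)
  case 0 then show ?case by simp
next
  case (Suc k)
  show ?case
    by (rule Ck_on.simps(2)[THEN iffD2], rule exI[where x="\<lambda>x h. 0"]) (auto simp: Suc)
qed

lemma Ck_on_linear_comp:
  fixes L :: "'b::euclidean_space \<Rightarrow> 'c::euclidean_space"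
  assumes "linear L"
  shows "Ck_on k U f \<Longrightarrow> Ck_on k U (\<lambda>x. L (f x))"
proof (induction k arbitrary: f)
  case 0
  have "bounded_linear L" using assms linear_conv_bounded_linear by blast
  then show ?case using 0 by (auto intro: bounded_linear.continuous_on)
next
  case (Suc k)
  from Suc.prems obtain f' where d: "\<forall>x\<in>U. (f has_derivative f' x) (at x)"
    and c: "\<forall>v\<in>Basis. Ck_on k U (\<lambda>x. f' x v)" by auto
  have bl: "bounded_linear L" using assms linear_conv_bounded_linear by blast
  show ?case
    apply (rule Ck_on.simps(2)[THEN iffD2], rule exI[where x="\<lambda>x h. L (f' x h)"])
    using d c Suc.IH bounded_linear.has_derivative[OF bl] by fastforce
qed

lemma Ck_on_add:
  shows "Ck_on k U f \<Longrightarrow> Ck_on k U g \<Longrightarrow> Ck_on k U (\<lambda>x. f x + g x)"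
proof (induction k arbitrary: f g)
  case 0 then show ?case by (auto intro: continuous_on_add)
next
  case (Suc k)
  from Suc.prems obtain f' where d: "\<forall>x\<in>U. (f has_derivative f' x) (at x)"
    and c: "\<forall>v\<in>Basis. Ck_on k U (\<lambda>x. f' x v)" by auto
  from Suc.prems obtain g' where d2: "\<forall>x\<in>U. (g has_derivative g' x) (at x)"
    and c2: "\<forall>v\<in>Basis. Ck_on k U (\<lambda>x. g' x v)" by auto
  show ?case
    apply (rule Ck_on.simps(2)[THEN iffD2], rule exI[where x="\<lambda>x h. f' x h + g' x h"])
    using d c d2 c2 Suc.IH by (auto intro: has_derivative_add)
qed

lemma Ck_on_sum:
  assumes "finite S"
  shows "(\<And>i. i \<in> S \<Longrightarrow> Ck_on k U (f i)) \<Longrightarrow> Ck_on k U (\<lambda>x. \<Sum>i\<in>S. f i x)"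
  using assms
proof (induction S rule: finite_induct)
  case empty then show ?case by (simp add: Ck_on_const)
next
  case (insert a S) then show ?case by (simp add: Ck_on_add)
qed

lemma Ck_on_mult:
  fixes f g :: "'a::euclidean_space \<Rightarrow> real"
  shows "Ck_on k U f \<Longrightarrow> Ck_on k U g \<Longrightarrow> Ck_on k U (\<lambda>x. f x * g x)"
proof (induction k arbitrary: f g)
  case 0 then show ?case by (auto intro: continuous_on_mult)
next
  case (Suc k)
  from Suc.prems obtain f' where d: "\<forall>x\<in>U. (f has_derivative f' x) (at x)"
    and c: "\<forall>v\<in>Basis. Ck_on k U (\<lambda>x. f' x v)" by auto
  from Suc.prems obtain g' where d2: "\<forall>x\<in>U. (g has_derivative g' x) (at x)"
    and c2: "\<forall>v\<in>Basis. Ck_on k U (\<lambda>x. g' x v)" by auto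
  have fk: "Ck_on k U f" "Ck_on k U g" using Suc.prems Ck_on_Suc_imp by blast+
  show ?case
    apply (rule Ck_on.simps(2)[THEN iffD2], rule exI[where x="\<lambda>x h. f x * g' x h + f' x h * g x"])
    using d c d2 c2 Suc.IH fk by (auto intro!: has_derivative_mult Ck_on_add)
qed

lemma Ck_on_prod:
  fixes f :: "'i \<Rightarrow> 'a::euclidean_space \<Rightarrow> real"
  assumes "finite S"
  shows "(\<And>i. i \<in> S \<Longrightarrow> Ck_on k U (f i)) \<Longrightarrow> Ck_on k U (\<lambda>x. \<Prod>i\<in>S. f i x)"
  using assms
proof (induction S rule: finite_induct)
  case empty then show ?case by (simp add: Ck_on_const)
next
  case (insert a S) then show ?case by (simp add: Ck_on_mult)
qed

lemma Ck_on_inverse: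
  fixes f :: "'a::euclidean_space \<Rightarrow> real"
  shows "Ck_on k U f \<Longrightarrow> (\<forall>x\<in>U. f x \<noteq> 0) \<Longrightarrow> Ck_on k U (\<lambda>x. inverse (f x))"
proof (induction k arbitrary: f)
  case 0 then show ?case by (auto intro: continuous_on_inverse)
next
  case (Suc k)
  from Suc.prems obtain f' where d: "\<forall>x\<in>U. (f has_derivative f' x) (at x)"
    and c: "\<forall>v\<in>Basis. Ck_on k U (\<lambda>x. f' x v)" by auto
  have fk: "Ck_on k U f" using Suc.prems Ck_on_Suc_imp by blast
  have ik: "Ck_on k U (\<lambda>x. inverse (f x))" using Suc.IH fk Suc.prems by blast
  have lin: "linear (\<lambda>y::real. - y)" by (simp add: linearI)
  show ?case
    apply (rule Ck_on.simps(2)[THEN iffD2], rule exI[where x="\<lambda>x h. - (inverse (f x) * f' x h * inverse (f x))"])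
    using d c Suc.prems ik
    by (auto intro!: has_derivative_inverse Ck_on_mult Ck_on_linear_comp[OF lin, of k U])
qed

lemma Ck_on_divide:
  fixes f g :: "'a::euclidean_space \<Rightarrow> real"
  shows "Ck_on k U f \<Longrightarrow> Ck_on k U g \<Longrightarrow> (\<forall>x\<in>U. g x \<noteq> 0) \<Longrightarrow> Ck_on k U (\<lambda>x. f x / g x)"
  unfolding divide_inverse by (intro Ck_on_mult Ck_on_inverse)

lemma Ck_on_componentwise:
  fixes f :: "'a::euclidean_space \<Rightarrow> 'b::euclidean_space"
  shows "(\<forall>b\<in>Basis. Ck_on k U (\<lambda>x. f x \<bullet> b)) \<Longrightarrow> Ck_on k U f"
proof (induction k arbitrary: f)
  case 0 then show ?case unfolding Ck_on.simps by (subst continuous_on_componentwise) simp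
next
  case (Suc k)
  have "\<forall>b\<in>Basis. \<exists>F'. (\<forall>x\<in>U. ((\<lambda>x. f x \<bullet> b) has_derivative F' x) (at x)) \<and> (\<forall>v\<in>Basis. Ck_on k U (\<lambda>x. F' x v))"
    using Suc.prems by (simp only: Ck_on.simps)
  from bchoice[OF this] obtain F' where F': "\<forall>b\<in>Basis. (\<forall>x\<in>U. ((\<lambda>x. f x \<bullet> b) has_derivative F' b x) (at x)) \<and> (\<forall>v\<in>Basis. Ck_on k U (\<lambda>x. F' b x v))"
    by blast
  define f' where "f' x h = (\<Sum>b\<in>Basis. F' b x h *\<^sub>R b)" for x h
  have comp: "f' x h \<bullet> i = F' i x h" if "i \<in> Basis" for x h i
    using that by (simp add: f'_def inner_sum_left inner_Basis if_distrib cong: if_cong)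
  have der: "(f has_derivative f' x) (at x)" if "x \<in> U" for x
  proof -
    have "\<forall>i\<in>Basis. ((\<lambda>x. f x \<bullet> i) has_derivative (\<lambda>h. f' x h \<bullet> i)) (at x within UNIV)"
    proof
      fix i :: 'b assume i: "i \<in> Basis"
      have "(\<lambda>h. f' x h \<bullet> i) = F' i x" using comp[OF i] by (rule ext)
      moreover have "((\<lambda>x. f x \<bullet> i) has_derivative F' i x) (at x)" using F' i that by blast
      ultimately show "((\<lambda>x. f x \<bullet> i) has_derivative (\<lambda>h. f' x h \<bullet> i)) (at x within UNIV)"
        by metis
    qed
    then show ?thesis by (simp only: has_derivative_componentwise_within[of f "f' x" x UNIV])
  qed
  have ck: "Ck_on k U (\<lambda>x. f' x v)" if "v \<in> Basis" for v
  proof -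
    have "\<forall>i\<in>Basis. Ck_on k U (\<lambda>x. f' x v \<bullet> i)"
    proof
      fix i :: 'b assume i: "i \<in> Basis"
      have "(\<lambda>x. f' x v \<bullet> i) = (\<lambda>x. F' i x v)" using comp[OF i] by (intro ext)
      moreover have "Ck_on k U (\<lambda>x. F' i x v)" using F' i that by blast
      ultimately show "Ck_on k U (\<lambda>x. f' x v \<bullet> i)" by metis
    qed
    then show ?thesis by (rule Suc.IH)
  qed
  show ?case
    by (rule Ck_on.simps(2)[THEN iffD2], rule exI[where x=f']) (auto simp: der ck)
qed

lemma Ck_on_inner:
  fixes f :: "'a::euclidean_space \<Rightarrow> 'b::euclidean_space"
  shows "Ck_on k U f \<Longrightarrow> Ck_on k U (\<lambda>x. f x \<bullet> b)"
  by (rule Ck_on_linear_comp) (auto simp: linear_iff inner_add_left)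

lemma Ck_on_vec:
  fixes f :: "'a::euclidean_space \<Rightarrow> real^'m"
  shows "(\<And>i. Ck_on k U (\<lambda>x. f x $ i)) \<Longrightarrow> Ck_on k U f"
  by (rule Ck_on_componentwise) (auto simp: Basis_vec_def inner_axis)

lemma Ck_on_vec_nth:
  fixes f :: "'a::euclidean_space \<Rightarrow> real^'m"
  shows "Ck_on k U f \<Longrightarrow> Ck_on k U (\<lambda>x. f x $ i)"
  using Ck_on_inner[of k U f "axis i 1"] by (simp add: inner_axis)

lemma Ck_on_linear:
  fixes L :: "'a::euclidean_space \<Rightarrow> 'b::euclidean_space"
  assumes "linear L"
  shows "Ck_on k U L"
proof (cases k)
  case 0 then show ?thesis using assms linear_conv_bounded_linear linear_continuous_on by auto
next
  case (Suc j)
  have bl: "bounded_linear L" using assms linear_conv_bounded_linear by blast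
  show ?thesis unfolding Suc
    by (rule Ck_on.simps(2)[THEN iffD2], rule exI[where x="\<lambda>x. L"])
       (auto simp: Ck_on_const bounded_linear.has_derivative[OF bl has_derivative_ident])
qed


lemma Ck_on_cong:
  assumes "open U" "\<And>x. x \<in> U \<Longrightarrow> f x = g x"
  shows "Ck_on k U f \<Longrightarrow> Ck_on k U g"
proof (cases k)
  case 0 then show "Ck_on k U f \<Longrightarrow> Ck_on k U g" using assms continuous_on_cong by force
next
  case (Suc j)
  assume "Ck_on k U f"
  then obtain f' where d: "\<forall>x\<in>U. (f has_derivative f' x) (at x)"
    and c: "\<forall>v\<in>Basis. Ck_on j U (\<lambda>x. f' x v)" using Suc by auto
  have "\<forall>x\<in>U. (g has_derivative f' x) (at x)"
    using d assms by (metis has_derivative_transform_within_open)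
  then show ?thesis using c Suc by auto
qed

lemma Ck_on_det:
  fixes A :: "'a::euclidean_space \<Rightarrow> real^'m^'m"
  assumes "\<And>i j. Ck_on k U (\<lambda>x. A x $ i $ j)"
  shows "Ck_on k U (\<lambda>x. det (A x))"
  unfolding det_def
  by (intro Ck_on_sum Ck_on_mult Ck_on_const Ck_on_prod finite_permutations assms) auto

lemma Ck_on_cramer:
  fixes A :: "'a::euclidean_space \<Rightarrow> real^'m^'m"
  assumes "\<And>i j. Ck_on k U (\<lambda>x. A x $ i $ j)" and "\<forall>x\<in>U. det (A x) \<noteq> 0"
  shows "Ck_on k U (\<lambda>x. (\<chi> j. det(\<chi> i j'. if j'=j then b$i else A x$i$j') / det (A x)))"
proof (rule Ck_on_vec)
  fix j
  have e: "Ck_on k U (\<lambda>x. (\<chi> i j'. if j'=j then b$i else A x$i$j') $ i $ j')" for i j'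
    by (cases "j' = j") (auto simp: Ck_on_const assms)
  show "Ck_on k U (\<lambda>x. (\<chi> j. det(\<chi> i j'. if j'=j then b$i else A x$i$j') / det (A x)) $ j)"
    using Ck_on_divide[OF Ck_on_det[OF e] Ck_on_det[OF assms(1)] assms(2)] by simp
qed

lemma Ck_on_quad:
  assumes "bilinear B"
  shows "Ck_on k U (\<lambda>y. B y y)"
proof -
  have bb: "bounded_bilinear B" using assms bilinear_conv_bounded_bilinear by blast
  have der: "((\<lambda>y. B y y) has_derivative (\<lambda>h. B y h + B h y)) (at y)" for y
    using bounded_bilinear.FDERIV[OF bb has_derivative_ident has_derivative_ident] by simp
  show ?thesis
  proof (cases k)
    case 0 then show ?thesis using der
      by (auto intro!: continuous_at_imp_continuous_on dest: has_derivative_continuous)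
  next
    case (Suc j)
    have lin: "linear (\<lambda>y. B y v + B v y)" for v
      using assms unfolding bilinear_def by (intro linear_compose_add) auto
    show ?thesis unfolding Suc
      by (rule Ck_on.simps(2)[THEN iffD2], rule exI[where x="\<lambda>y h. B y h + B h y"])
         (auto simp: der Ck_on_linear[OF lin])
  qed
qed

lemma orthonormal_expand:
  fixes OB :: "'a::euclidean_space set"
  assumes "finite OB" "pairwise orthogonal OB" "\<And>b. b \<in> OB \<Longrightarrow> norm b = 1" "v \<in> span OB"
  shows "(\<Sum>b\<in>OB. (v \<bullet> b) *\<^sub>R b) = v"
proof -
  let ?P = "\<lambda>v. (\<Sum>b\<in>OB. (v \<bullet> b) *\<^sub>R b) - v"
  have lin: "linear ?P"
    by (intro linear_compose_sub linear_compose_sum linear_id) (auto simp: linear_iff inner_add_left scaleR_add_left)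
  have "?P b' = 0" if b': "b' \<in> OB" for b'
  proof -
    have "(\<Sum>b\<in>OB. (b' \<bullet> b) *\<^sub>R b) = (\<Sum>b\<in>OB. if b = b' then b' else 0)"
    proof (rule sum.cong)
      fix b assume "b \<in> OB"
      then show "(b' \<bullet> b) *\<^sub>R b = (if b = b' then b' else 0)"
        using assms(2,3) b' by (auto simp: pairwise_def orthogonal_def inner_commute dot_square_norm)
    qed simp
    then show ?thesis using b' assms(1) by simp
  qed
  then have "?P v = 0" using linear_eq_0_on_span[OF lin _ assms(4)] by blast
  then show ?thesis by simp
qed


theorem quadric_submanifold:
  fixes B :: "real^'m \<Rightarrow> real^'m \<Rightarrow> real^'k" and c :: "real^'k"
  assumes bil: "bilinear B"
    and surj: "\<And>x0 y. B x0 x0 = c \<Longrightarrow> \<exists>h. B y y - c = B h x0 + B x0 h"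
    and rank: "\<And>x0. B x0 x0 = c \<Longrightarrow> dim (range (\<lambda>h. B h x0 + B x0 h)) = r"
  shows "embedded_submanifold {x. B x x = c} (CARD('m) - r)"
  unfolding embedded_submanifold_def
proof
  fix x0 assume "x0 \<in> {x. B x x = c}"
  then have x0: "B x0 x0 = c" by simp
  have bb: "bounded_bilinear B" using bil bilinear_conv_bounded_bilinear by blast
  have linl: "linear (\<lambda>x. B x y)" for y using bil by (simp add: bilinear_def)
  have linr: "linear (\<lambda>y. B x y)" for x using bil by (simp add: bilinear_def)
  define D where "D h = B h x0 + B x0 h" for h
  have linD: "linear D" unfolding D_def by (intro linear_compose_add linl linr)
  define K where "K = {h. D h = 0}"
  have subK: "subspace K" unfolding K_def by (rule linear_subspace_kernel[OF linD])
  obtain OB where OB: "OB \<subseteq> K" "pairwise orthogonal OB" "\<And>x. x \<in> OB \<Longrightarrow> norm x = 1"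
      "independent OB" "card OB = dim K" "span OB = K"
    using orthonormal_basis_subspace[OF subK] by metis
  have finOB: "finite OB" using OB(4) independent_imp_finite by blast
  define P where "P v = (\<Sum>b\<in>OB. (v \<bullet> b) *\<^sub>R b)" for v
  have linP: "linear P" unfolding P_def
    by (intro linear_compose_sum) (auto simp: linear_iff inner_add_left scaleR_add_left)
  have PK: "P v \<in> K" for v
  proof -
    have "P v \<in> span OB" unfolding P_def by (intro span_sum span_scale span_base)
    then show ?thesis using OB(6) by simp
  qed
  have PKid: "P k = k" if "k \<in> K" for k
    using orthonormal_expand[OF finOB OB(2) OB(3)] OB(6) that unfolding P_def by auto
  define Da where "Da = adjoint D"
  have linDa: "linear Da" using adjoint_linear[OF linD] Da_def by simp
  have Daw: "k \<bullet> Da w = D k \<bullet> w" for k w using adjoint_works[OF linD] Da_def by simp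
  have DaK0: "a = 0" if "a \<in> K" "a = Da w" for a w
  proof -
    have "a \<bullet> a = 0" using Daw[of a w] that K_def by simp
    then show ?thesis by simp
  qed
  have Da0: "w = 0" if "Da w = 0" "w = D h" for w h
  proof -
    have "w \<bullet> w = 0" using Daw[of h w] that by simp
    then show ?thesis by simp
  qed
  have blP: "bounded_linear P" using linP linear_conv_bounded_linear by blast
  have blDa: "bounded_linear Da" using linDa linear_conv_bounded_linear by blast
  define c0 where "c0 = - (P x0 + Da c)"
  define phi where "phi y = P y + Da (B y y) + c0" for y
  define phi' where "phi' y h = P h + Da (B y h + B h y)" for y h
  have der: "(phi has_derivative phi' y) (at y)" for y
  proof -
    have d2: "((\<lambda>y. Da (B y y)) has_derivative (\<lambda>h. Da (B y h + B h y))) (at y)"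
      using bounded_linear.has_derivative[OF blDa bounded_bilinear.FDERIV[OF bb has_derivative_ident has_derivative_ident]] by simp
    have d1: "(P has_derivative P) (at y)" using blP by (rule bounded_linear_imp_has_derivative)
    have "((\<lambda>y. P y + Da (B y y) + c0) has_derivative (\<lambda>h. P h + Da (B y h + B h y))) (at y)"
      using has_derivative_add_const[OF has_derivative_add[OF d1 d2]] by simp
    then show ?thesis unfolding phi_def[abs_def] phi'_def by simp
  qed
  have blphi': "bounded_linear (phi' y)" for y using der has_derivative_bounded_linear by blast
  have linphi': "linear (phi' y)" for y using blphi' bounded_linear.linear by blast
  define f' where "f' y = Blinfun (phi' y)" for y
  have f'app: "blinfun_apply (f' y) = phi' y" for y using bounded_linear_Blinfun_apply[OF blphi'] f'_def by simp
  have contf': "continuous_on UNIV f'"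
  proof (rule continuous_on_blinfun_componentwise)
    fix i :: "real^'m" assume "i \<in> Basis"
    have "linear (\<lambda>y. Da (B y i + B i y))"
      using linear_compose[OF linear_compose_add[OF linl linr] linDa] by (simp add: o_def)
    then have "continuous_on UNIV (\<lambda>y. Da (B y i + B i y))"
      using linear_conv_bounded_linear linear_continuous_on by blast
    then show "continuous_on UNIV (\<lambda>y. blinfun_apply (f' y) i)"
      unfolding f'app phi'_def by (intro continuous_on_add continuous_on_const)
  qed
  have inj0: "inj (phi' x0)"
    unfolding linear_inj_iff_eq_0[OF linphi']
  proof (intro allI impI)
    fix v assume v: "phi' x0 v = 0"
    have e: "phi' x0 v = P v + Da (D v)" unfolding phi'_def D_def by (simp add: add.commute)
    have "P v = - Da (D v)" using v e by (simp add: eq_neg_iff_add_eq_0)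
    then have "P v = Da (- D v)" by (simp add: linear_neg[OF linDa])
    then have Pv: "P v = 0" using DaK0 PK by blast
    then have "Da (D v) = 0" using v e by simp
    then have "D v = 0" using Da0 by blast
    then have "v \<in> K" by (simp add: K_def)
    then show "v = 0" using PKid Pv by metis
  qed
  have surj0: "surj (phi' x0)" using linear_injective_imp_surjective[OF linphi' inj0] by simp
  obtain fi where fi: "linear fi" "\<And>x. fi (phi' x0 x) = x" "\<And>x. phi' x0 (fi x) = x"
    using linear_injective_isomorphism[OF linphi' inj0] by auto
  have blfi: "bounded_linear fi" using fi(1) linear_conv_bounded_linear by blast
  define invf where "invf = Blinfun fi"
  have invf: "invf o\<^sub>L f' x0 = id_blinfun"
    by (rule blinfun_eqI) (simp add: invf_def bounded_linear_Blinfun_apply[OF blfi] f'app fi(2))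
  obtain U' V g g' where U': "open U'" "x0 \<in> U'" and V: "open V" "phi x0 \<in> V"
    and hom: "homeomorphism U' V phi g"
    and derg: "\<And>y. y \<in> V \<Longrightarrow> (g has_derivative (g' y)) (at y)"
    and g': "\<And>y. y \<in> V \<Longrightarrow> g' y = inv (phi' (g y))"
    and bijg: "\<And>y. y \<in> V \<Longrightarrow> bij (phi' (g y))"
    apply (rule inverse_function_theorem[of UNIV phi f' x0 invf])
    by (simp_all add: der f'app contf' invf)
  have homs: "\<forall>x\<in>U'. g (phi x) = x" "phi ` U' = V" "\<forall>y\<in>V. phi (g y) = y" "g ` V = U'"
     "continuous_on V g"
    using hom unfolding homeomorphism_def by auto
  have gCk: "Ck_on k V g" for k
  proof (induction k)
    case 0 then show ?case using homs by simp
  next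
    case (Suc k)
    define A where "A y = matrix (phi' (g y))" for y
    have entries: "Ck_on k V (\<lambda>y. A y $ i $ j)" for i j
    proof -
      define e :: "real^'m" where "e = axis j 1"
      have linL: "linear (\<lambda>u. Da (B u e + B e u) $ i)"
        using linear_compose[OF linear_compose[OF linear_compose_add[OF linl linr] linDa], of "\<lambda>x. x $ i"]
        by (simp add: o_def linear_iff)
      have "Ck_on k V (\<lambda>y. P e $ i + Da (B (g y) e + B e (g y)) $ i)"
        by (intro Ck_on_add Ck_on_const Ck_on_linear_comp[OF linL, of k V g] Suc)
      then show ?thesis by (simp add: A_def matrix_def phi'_def e_def)
    qed
    have detnz: "\<forall>y\<in>V. det (A y) \<noteq> 0"
      using det_nz_iff_inj[OF linphi'] bijg bij_is_inj A_def by metis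
    have eq: "(\<chi> j. det(\<chi> i j'. if j'=j then v$i else A y$i$j') / det (A y)) = g' y v"
      if "y \<in> V" for y v
    proof -
      let ?x = "g' y v"
      have "phi' (g y) ?x = v" using g'[OF that] bijg[OF that]
        by (simp add: bij_is_surj surj_f_inv_f)
      then have "A y *v ?x = v" unfolding A_def
        using matrix_works[of "phi' (g y)"] linphi' linear_matrix_vector_mul_eq by metis
      then show ?thesis using cramer[of "A y" ?x v] detnz that by simp
    qed
    have "Ck_on k V (\<lambda>y. g' y v)" for v
      using Ck_on_cong[OF V(1) eq Ck_on_cramer[OF entries detnz]] by simp
    then show ?case using derg by auto
  qed
  have phiCk: "Ck_on k U' phi" for k
  proof -
    have "Ck_on k UNIV (\<lambda>y. P y + Da (B y y) + c0)"
      by (intro Ck_on_add Ck_on_const Ck_on_linear[OF linP] Ck_on_linear_comp[OF linDa] Ck_on_quad[OF bil])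
    then show ?thesis using Ck_on_subset unfolding phi_def[abs_def] by blast
  qed
  define Kp where "Kp = {y. \<forall>x\<in>K. orthogonal x y}"
  have subKp: "subspace Kp" unfolding Kp_def by (rule subspace_orthogonal_to_vectors)
  have dsum: "dim Kp + dim K = CARD('m)"
    using dim_subspace_orthogonal_to_vectors[OF subK subspace_UNIV] by (simp add: Kp_def)
  have spK: "span K = K" using subK by (rule span_eq_iff[THEN iffD2])
  have spKp: "span Kp = Kp" using subKp by (rule span_eq_iff[THEN iffD2])
  have rng: "range D = D ` Kp"
  proof
    show "range D \<subseteq> D ` Kp"
    proof
      fix u assume "u \<in> range D"
      then obtain v where u: "u = D v" by auto
      obtain y z where yz: "y \<in> span K" "\<And>w. w \<in> span K \<Longrightarrow> orthogonal z w" "v = y + z"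
        using orthogonal_subspace_decomp_exists[of K v] by blast
      have "y \<in> K" using yz(1) spK by blast
      then have "D y = 0" by (simp add: K_def)
      then have "D v = D z" using yz(3) linear_add[OF linD, of y z] by simp
      moreover have "z \<in> Kp" unfolding Kp_def
      proof (intro CollectI ballI)
        fix x assume "x \<in> K"
        then have "orthogonal z x" using yz(2) spK by blast
        then show "orthogonal x z" using orthogonal_commute by blast
      qed
      ultimately show "u \<in> D ` Kp" using u by blast
    qed
  qed blast
  have injKp: "inj_on D (span Kp)"
  proof (rule inj_onI)
    fix a b assume ab: "a \<in> span Kp" "b \<in> span Kp" "D a = D b"
    have "a - b \<in> Kp" using ab spKp subspace_diff[OF subKp] by blast
    moreover have "D (a - b) = 0" using ab(3) linear_diff[OF linD, of a b] by simp
    then have "a - b \<in> K" by (simp add: K_def)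
    ultimately have "orthogonal (a - b) (a - b)" unfolding Kp_def by blast
    then have "(a - b) \<bullet> (a - b) = 0" by (simp only: orthogonal_def)
    then show "a = b" by simp
  qed
  have dr: "dim (range D) = dim Kp" using rng dim_image_eq[OF linD injKp] by simp
  have r: "r = dim (range D)" using rank[OF x0] unfolding D_def[abs_def] by simp
  have dimK: "dim K = CARD('m) - r" using dr r dsum by simp
  have phialt: "phi y = P (y - x0) + Da (B y y - c)" for y
    unfolding phi_def c0_def using linear_diff[OF linP] linear_diff[OF linDa] by simp
  have slice: "phi ` ({x. B x x = c} \<inter> U') = V \<inter> K"
  proof
    show "phi ` ({x. B x x = c} \<inter> U') \<subseteq> V \<inter> K"
    proof
      fix z assume "z \<in> phi ` ({x. B x x = c} \<inter> U')"
      then obtain y where y: "B y y = c" "y \<in> U'" "z = phi y" by auto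
      have "z \<in> V" using y homs by blast
      moreover have "z \<in> K" using y phialt PK linear_0[OF linDa] by simp
      ultimately show "z \<in> V \<inter> K" by simp
    qed
    show "V \<inter> K \<subseteq> phi ` ({x. B x x = c} \<inter> U')"
    proof
      fix z assume z: "z \<in> V \<inter> K"
      define y where "y = g z"
      have yU: "y \<in> U'" using z homs y_def by blast
      have pz: "phi y = z" using z homs y_def by blast
      have "Da (B y y - c) = z - P (y - x0)" using pz phialt by (metis add_diff_cancel_left')
      moreover have "z - P (y - x0) \<in> K" using z PK subK by (simp add: subspace_diff)
      ultimately have "Da (B y y - c) = 0" using DaK0 by metis
      moreover obtain h where "B y y - c = D h" using surj[OF x0, of y] D_def by metis
      ultimately have "B y y - c = 0" using Da0 by blast
      then have "B y y = c" by simp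
      then show "z \<in> phi ` ({x. B x x = c} \<inter> U')" using yU pz by blast
    qed
  qed
  show "\<exists>U V (\<phi>::real^'m \<Rightarrow> real^'m) \<psi> E.
        open U \<and> x0 \<in> U \<and> open V \<and> subspace E \<and> dim E = CARD('m) - r \<and>
        smooth_on U \<phi> \<and> smooth_on V \<psi> \<and> \<phi> ` U = V \<and>
        (\<forall>y\<in>U. \<psi> (\<phi> y) = y) \<and> (\<forall>z\<in>V. \<phi> (\<psi> z) = z) \<and>
        \<phi> ` ({x. B x x = c} \<inter> U) = V \<inter> E"
    apply (rule exI[of _ U'], rule exI[of _ V], rule exI[of _ phi], rule exI[of _ g], rule exI[of _ K])
    using U' V subK dimK phiCk gCk homs slice by (auto simp: smooth_on_def)
qed


lemma enum_len: "length (Enum.enum :: 'l::enum list) = CARD('l)"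
  by (metis UNIV_enum distinct_card enum_distinct)

lemma L_pos: "0 < CARD('l::enum)"
  by simp

lemma si_inj: "i < CARD('l) \<Longrightarrow> j < CARD('l) \<Longrightarrow> (slice_idx i :: 'l::enum) = slice_idx j \<Longrightarrow> i = j"
  unfolding slice_idx_def using enum_distinct nth_eq_iff_index_eq enum_len[where 'l='l] by metis

lemma si_surj: "\<exists>i < CARD('l). slice_idx i = (k::'l::enum)"
proof -
  have "k \<in> set (Enum.enum :: 'l list)" using UNIV_enum by auto
  then show ?thesis unfolding slice_idx_def using in_set_conv_nth enum_len[where 'l='l] by metis
qed

lemma sp_ex1: "\<exists>!i. i < CARD('l) \<and> slice_idx i = (k::'l::enum)"
  using si_surj si_inj by metis

lemma sp_lt: "slice_pos (k::'l::enum) < CARD('l)"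
  unfolding slice_pos_def using theI'[OF sp_ex1] by blast

lemma si_sp[simp]: "slice_idx (slice_pos (k::'l::enum)) = k"
  unfolding slice_pos_def using theI'[OF sp_ex1] by blast

lemma sp_si[simp]: "i < CARD('l::enum) \<Longrightarrow> slice_pos (slice_idx i :: 'l) = i"
  using si_inj sp_lt si_sp by metis

lemma mod2: "(x::nat) < 2 * L \<Longrightarrow> x mod L = (if x < L then x else x - L)"
  by (simp add: le_mod_geq)

lemma modA: "a < L \<Longrightarrow> b < L \<Longrightarrow> c < L \<Longrightarrow>
   ((a + L - c) mod L + L - (b + L - c) mod L) mod L = (a + L - b) mod (L::nat)"
  by (simp add: mod2)

lemma modT: "a < L \<Longrightarrow> b < L \<Longrightarrow> (L - (a + L - b) mod L) mod L = (b + L - a) mod (L::nat)"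
  by (simp add: mod2) arith

definition bcirc :: "('n::finite, 'p::finite, 'l::enum) tensor \<Rightarrow> real^('p \<times> 'l)^('n \<times> 'l)" where
  "bcirc A = (\<chi> x y. A $ (fst x, fst y, slice_idx ((slice_pos (snd x) + CARD('l) - slice_pos (snd y)) mod CARD('l))))"

lemma bcirc_nth: "bcirc A $ (a,k) $ (c,k') = A $ (a, c, slice_idx ((slice_pos k + CARD('l) - slice_pos k') mod CARD('l)))"
  for A :: "('n::finite, 'p::finite, 'l::enum) tensor"
  by (simp add: bcirc_def)

lemma bcirc_inj: "bcirc A = bcirc B \<Longrightarrow> A = B"
  for A B :: "('n::finite, 'p::finite, 'l::enum) tensor"
proof -
  assume h: "bcirc A = bcirc B"
  have "A $ (a,c,k) = B $ (a,c,k)" for a c k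
  proof -
    have "bcirc A $ (a,k) $ (c, slice_idx 0) = bcirc B $ (a,k) $ (c, slice_idx 0)" using h by simp
    then show ?thesis by (simp add: bcirc_nth sp_lt)
  qed
  then show "A = B" by (simp add: vec_eq_iff)
qed

lemma bcirc_add: "bcirc (A + B) = bcirc A + bcirc B"
  by (simp add: vec_eq_iff bcirc_nth)

lemma bcirc_scale: "bcirc (r *\<^sub>R A) = r *\<^sub>R bcirc A"
  by (simp add: vec_eq_iff bcirc_nth)

lemma modI: "a < L \<Longrightarrow> b < L \<Longrightarrow> c < L \<Longrightarrow> (a + L - c) mod L = (b + L - c) mod L \<Longrightarrow> a = (b::nat)"
  by (simp add: mod2 split: if_splits)

lemma modS: "j < L \<Longrightarrow> c < L \<Longrightarrow> ((j + c) mod L + L - c) mod L = (j::nat)"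
  by (simp add: mod2)

lemma mod0: "a < L \<Longrightarrow> b < L \<Longrightarrow> ((a + L - b) mod L = 0) = (a = (b::nat))"
  by (simp add: mod2) arith

lemma bcirc_tident: "bcirc (tident :: ('p::finite, 'p, 'l::enum) tensor) = mat 1"
proof -
  have e: "(slice_pos k + CARD('l) - slice_pos k') mod CARD('l) = 0 \<longleftrightarrow> k = k'" for k k' :: 'l
    using mod0[OF sp_lt[of k] sp_lt[of k']] si_sp by metis
  have "bcirc (tident :: ('p, 'p, 'l) tensor) $ (a,k) $ (b,k') = mat 1 $ (a,k) $ (b,k')" for a b :: 'p and k k' :: 'l
    by (simp add: bcirc_nth tident_def mat_def e)
  then show ?thesis by (simp add: vec_eq_iff)
qed

lemma bij_shift:
  assumes "s0 < CARD('l::enum)"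
  shows "bij_betw (\<lambda>k'::'l. (slice_pos k' + CARD('l) - s0) mod CARD('l)) UNIV {..<CARD('l)}"
proof (rule bij_betw_imageI)
  show "inj_on (\<lambda>k'::'l. (slice_pos k' + CARD('l) - s0) mod CARD('l)) UNIV"
  proof (rule inj_onI)
    fix k1 k2 :: 'l
    assume "(slice_pos k1 + CARD('l) - s0) mod CARD('l) = (slice_pos k2 + CARD('l) - s0) mod CARD('l)"
    then have "slice_pos k1 = slice_pos k2"
      using modI[OF sp_lt[of k1] sp_lt[of k2] assms] by blast
    then show "k1 = k2" using si_sp by metis
  qed
  show "(\<lambda>k'::'l. (slice_pos k' + CARD('l) - s0) mod CARD('l)) ` UNIV = {..<CARD('l)}"
  proof
    show "(\<lambda>k'::'l. (slice_pos k' + CARD('l) - s0) mod CARD('l)) ` UNIV \<subseteq> {..<CARD('l)}" by auto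
    show "{..<CARD('l)} \<subseteq> (\<lambda>k'::'l. (slice_pos k' + CARD('l) - s0) mod CARD('l)) ` UNIV"
    proof
      fix j assume j: "j \<in> {..<CARD('l)}"
      have jl: "j < CARD('l)" using j by simp
      define k' :: 'l where "k' = slice_idx ((j + s0) mod CARD('l))"
      have kpos: "slice_pos k' = (j + s0) mod CARD('l)" unfolding k'_def by (rule sp_si) simp
      have "j = (slice_pos k' + CARD('l) - s0) mod CARD('l)"
        by (simp only: kpos modS[OF jl assms])
      then show "j \<in> (\<lambda>k'::'l. (slice_pos k' + CARD('l) - s0) mod CARD('l)) ` UNIV"
        by (rule image_eqI) (rule UNIV_I)
    qed
  qed
qed

lemma bcirc_tprod: "bcirc (tprod A B) = bcirc A ** bcirc B"
  for A :: "('n::finite, 'p::finite, 'l::enum) tensor" and B :: "('p, 'm::finite, 'l) tensor"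
proof -
  have "bcirc (tprod A B) $ (a,k) $ (b,k'') = (bcirc A ** bcirc B) $ (a,k) $ (b,k'')" for a k b k''
  proof -
    define L where "L = CARD('l)"
    define m where "m = (slice_pos k + L - slice_pos k'') mod L"
    have mL: "m < L" unfolding m_def L_def by simp
    define G where "G j = (\<Sum>c\<in>UNIV. A $ (a, c, slice_idx ((m + L - j) mod L)) * B $ (c, b, slice_idx j))" for j
    have lhs: "bcirc (tprod A B) $ (a,k) $ (b,k'') = (\<Sum>j<L. G j)"
      by (simp add: bcirc_nth tprod_def G_def m_def L_def)
    have "(\<Sum>j<L. G j) = (\<Sum>k'\<in>(UNIV::'l set). G ((slice_pos k' + L - slice_pos k'') mod L))"
      using sum.reindex_bij_betw[OF bij_shift[OF sp_lt[of k'']], of G, symmetric] by (simp add: L_def)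
    also have "\<dots> = (\<Sum>k'\<in>(UNIV::'l set). \<Sum>c\<in>UNIV. A $ (a, c, slice_idx ((slice_pos k + L - slice_pos k') mod L))
          * B $ (c, b, slice_idx ((slice_pos k' + L - slice_pos k'') mod L)))"
    proof (rule sum.cong[OF refl])
      fix k' :: 'l
      have "(m + L - (slice_pos k' + L - slice_pos k'') mod L) mod L = (slice_pos k + L - slice_pos k') mod L"
        unfolding m_def L_def by (rule modA) (simp_all add: sp_lt)
      then show "G ((slice_pos k' + L - slice_pos k'') mod L) = (\<Sum>c\<in>UNIV. A $ (a, c, slice_idx ((slice_pos k + L - slice_pos k') mod L))
          * B $ (c, b, slice_idx ((slice_pos k' + L - slice_pos k'') mod L)))"
        unfolding G_def by simp
    qed
    also have "\<dots> = (\<Sum>k'\<in>(UNIV::'l set). \<Sum>c\<in>UNIV. bcirc A $ (a,k) $ (c,k') * bcirc B $ (c,k') $ (b,k''))"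
      by (simp add: bcirc_nth L_def)
    also have "\<dots> = (\<Sum>c\<in>UNIV. \<Sum>k'\<in>(UNIV::'l set). bcirc A $ (a,k) $ (c,k') * bcirc B $ (c,k') $ (b,k''))"
      by (rule sum.swap)
    also have "\<dots> = (\<Sum>z\<in>UNIV \<times> UNIV. bcirc A $ (a,k) $ z * bcirc B $ z $ (b,k''))"
      by (simp add: sum.cartesian_product)
    also have "\<dots> = (bcirc A ** bcirc B) $ (a,k) $ (b,k'')"
      by (simp add: matrix_matrix_mult_def)
    finally show ?thesis using lhs by simp
  qed
  then show ?thesis by (simp add: vec_eq_iff)
qed

lemma bcirc_ttrans: "bcirc (ttrans A) = transpose (bcirc A)"
  for A :: "('n::finite, 'p::finite, 'l::enum) tensor"
proof -
  have "bcirc (ttrans A) $ (b,k) $ (a,k') = transpose (bcirc A) $ (b,k) $ (a,k')" for a k b k'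
    using modT[OF sp_lt[of k] sp_lt[of k']] by (simp add: bcirc_nth ttrans_def transpose_def)
  then show ?thesis by (simp add: vec_eq_iff)
qed


lemma tprod_assoc: "tprod (tprod A B) C = tprod A (tprod B C)"
  for A :: "('n::finite, 'p::finite, 'l::enum) tensor" and B :: "('p, 'm::finite, 'l) tensor"
  and C :: "('m, 'q::finite, 'l) tensor"
  by (rule bcirc_inj) (simp add: bcirc_tprod matrix_mul_assoc)

lemma ttrans_tprod: "ttrans (tprod A B) = tprod (ttrans B) (ttrans A)"
  for A :: "('n::finite, 'p::finite, 'l::enum) tensor" and B :: "('p, 'm::finite, 'l) tensor"
  by (rule bcirc_inj) (simp add: bcirc_tprod bcirc_ttrans matrix_transpose_mul)

lemma ttrans_ttrans[simp]: "ttrans (ttrans A) = A"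
  for A :: "('n::finite, 'p::finite, 'l::enum) tensor"
  by (rule bcirc_inj) (simp add: bcirc_ttrans)

lemma ttrans_tident[simp]: "ttrans tident = (tident :: ('p::finite, 'p, 'l::enum) tensor)"
  by (rule bcirc_inj) (simp add: bcirc_ttrans bcirc_tident)

lemma tprod_ident_left[simp]: "tprod tident A = A"
  for A :: "('n::finite, 'p::finite, 'l::enum) tensor"
  by (rule bcirc_inj) (simp add: bcirc_tprod bcirc_tident)

lemma tprod_ident_right[simp]: "tprod A tident = A"
  for A :: "('n::finite, 'p::finite, 'l::enum) tensor"
  by (rule bcirc_inj) (simp add: bcirc_tprod bcirc_tident)

lemma tprod_add_left: "tprod (A + B) C = tprod A C + tprod B C"
  for A B :: "('n::finite, 'p::finite, 'l::enum) tensor" and C :: "('p, 'm::finite, 'l) tensor"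
  by (simp add: vec_eq_iff tprod_def sum.distrib distrib_right split: prod.splits)

lemma tprod_add_right: "tprod A (B + C) = tprod A B + tprod A C"
  for A :: "('n::finite, 'p::finite, 'l::enum) tensor" and B C :: "('p, 'm::finite, 'l) tensor"
  by (simp add: vec_eq_iff tprod_def sum.distrib distrib_left split: prod.splits)

lemma tprod_scale_left: "tprod (r *\<^sub>R A) C = r *\<^sub>R tprod A C"
  for A :: "('n::finite, 'p::finite, 'l::enum) tensor" and C :: "('p, 'm::finite, 'l) tensor"
  by (simp add: vec_eq_iff tprod_def sum_distrib_left mult.assoc split: prod.splits)

lemma tprod_scale_right: "tprod A (r *\<^sub>R C) = r *\<^sub>R tprod A C"
  for A :: "('n::finite, 'p::finite, 'l::enum) tensor" and C :: "('p, 'm::finite, 'l) tensor"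
  by (simp add: vec_eq_iff tprod_def sum_distrib_left mult.left_commute split: prod.splits)

lemma ttrans_add: "ttrans (A + B) = ttrans A + ttrans B"
  for A B :: "('n::finite, 'p::finite, 'l::enum) tensor"
  by (simp add: vec_eq_iff ttrans_def split: prod.splits)

lemma ttrans_scale: "ttrans (r *\<^sub>R A) = r *\<^sub>R ttrans A"
  for A :: "('n::finite, 'p::finite, 'l::enum) tensor"
  by (simp add: vec_eq_iff ttrans_def split: prod.splits)

lemma ttrans_diff: "ttrans (A - B) = ttrans A - ttrans B"
  for A B :: "('n::finite, 'p::finite, 'l::enum) tensor"
  by (simp add: vec_eq_iff ttrans_def split: prod.splits)

lemma bilinear_tst: "bilinear (\<lambda>(x::('n::finite, 'p::finite, 'l::enum) tensor) y. tprod (ttrans x) y)"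
  unfolding bilinear_def
  by (auto intro!: linearI simp: tprod_add_left tprod_add_right tprod_scale_left tprod_scale_right
      ttrans_add ttrans_scale)

definition tsym :: "('p::finite, 'p, 'l::enum) tensor set" where
  "tsym = {C. ttrans C = C}"

lemma key_identity:
  fixes X :: "('n::finite, 'p::finite, 'l::enum) tensor"
  assumes X: "tprod (ttrans X) X = tident" and C: "ttrans C = C"
  shows "tprod (ttrans (tprod X C)) X + tprod (ttrans X) (tprod X C) = 2 *\<^sub>R C"
proof -
  have "tprod (ttrans (tprod X C)) X = C"
    by (simp add: ttrans_tprod tprod_assoc X C)
  moreover have "tprod (ttrans X) (tprod X C) = C"
    by (simp add: tprod_assoc[symmetric] X)
  ultimately show ?thesis by (simp add: scaleR_2)
qed

lemma tst_surj:
  fixes X :: "('n::finite, 'p::finite, 'l::enum) tensor"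
  assumes X: "tprod (ttrans X) X = tident" and C: "ttrans C = C"
  shows "\<exists>h. C = tprod (ttrans h) X + tprod (ttrans X) h"
proof -
  let ?h = "(1/2) *\<^sub>R tprod X C"
  have "tprod (ttrans ?h) X + tprod (ttrans X) ?h = (1/2) *\<^sub>R (tprod (ttrans (tprod X C)) X + tprod (ttrans X) (tprod X C))"
    by (simp add: ttrans_scale tprod_scale_left tprod_scale_right scaleR_add_right)
  also have "\<dots> = C" by (simp add: key_identity[OF X C])
  finally show ?thesis by metis
qed

lemma tst_range:
  fixes X :: "('n::finite, 'p::finite, 'l::enum) tensor"
  assumes X: "tprod (ttrans X) X = tident"
  shows "range (\<lambda>h. tprod (ttrans h) X + tprod (ttrans X) h) = tsym"
proof
  show "range (\<lambda>h. tprod (ttrans h) X + tprod (ttrans X) h) \<subseteq> tsym"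
    by (auto simp: tsym_def ttrans_add ttrans_tprod)
  show "tsym \<subseteq> range (\<lambda>h. tprod (ttrans h) X + tprod (ttrans X) h)"
    using tst_surj[OF X] by (auto simp: tsym_def)
qed

lemma tst_F_sym: "ttrans (tprod (ttrans Y) Y - tident) = tprod (ttrans Y) Y - tident"
  for Y :: "('n::finite, 'p::finite, 'l::enum) tensor"
  by (simp add: ttrans_diff ttrans_tprod)


lemma dim_involution:
  fixes \<tau> :: "'i::finite \<Rightarrow> 'i"
  assumes inv: "\<And>i. \<tau> (\<tau> i) = i"
  shows "2 * dim {x::real^'i. \<forall>i. x $ \<tau> i = x $ i} = CARD('i) + card {i. \<tau> i = i}"
proof -
  obtain ind :: "'i \<Rightarrow> nat" and n where "ind ` UNIV = {i. i < n}" "inj_on ind UNIV"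
    using finite_imp_inj_to_nat_seg[of "UNIV :: 'i set"] by auto
  then have indinj: "ind i = ind j \<Longrightarrow> i = j" for i j by (meson injD)
  define R where "R = {i. ind i \<le> ind (\<tau> i)}"
  have ex: "\<exists>r\<in>R. j = r \<or> j = \<tau> r" for j
  proof (cases "ind j \<le> ind (\<tau> j)")
    case True then show ?thesis by (auto simp: R_def)
  next
    case False then show ?thesis using inv[of j] by (intro bexI[of _ "\<tau> j"]) (auto simp: R_def)
  qed
  have uniq: "r = r'" if "r \<in> R" "r' \<in> R" "j = r \<or> j = \<tau> r" "j = r' \<or> j = \<tau> r'" for r r' j
  proof -
    have A: "ind r \<le> ind (\<tau> r)" "ind r' \<le> ind (\<tau> r')" using that by (auto simp: R_def)
    show ?thesis using that(3,4)
    proof (elim disjE)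
      assume "j = r" "j = \<tau> r'"
      then have "\<tau> r = r'" using inv by metis
      then show "r = r'" using A inv[of r] indinj by (metis le_antisym)
    next
      assume "j = \<tau> r" "j = r'"
      then have "\<tau> r' = r" using inv by metis
      then show "r = r'" using A inv[of r'] indinj by (metis le_antisym)
    next
      assume "j = \<tau> r" "j = \<tau> r'" then show "r = r'" using inv by metis
    qed simp
  qed
  define \<beta> :: "'i \<Rightarrow> real^'i" where "\<beta> r = (\<chi> j. if j = r \<or> j = \<tau> r then 1 else 0)" for r
  define S where "S = {x::real^'i. \<forall>i. x $ \<tau> i = x $ i}"
  have e1: "(\<tau> i = r) = (i = \<tau> r)" for i r using inv by metis
  have e2: "(\<tau> i = \<tau> r) = (i = r)" for i r using inv by metis
  have BS: "\<beta> ` R \<subseteq> S"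
    unfolding S_def \<beta>_def by (auto simp: e1 e2 inv)
  have binj: "inj_on \<beta> R"
  proof (rule inj_onI)
    fix r r' assume rr: "r \<in> R" "r' \<in> R" "\<beta> r = \<beta> r'"
    have "\<beta> r $ r = 1" by (simp add: \<beta>_def)
    then have "\<beta> r' $ r = 1" using rr(3) by simp
    then have "r = r' \<or> r = \<tau> r'" unfolding \<beta>_def by (simp split: if_splits)
    then show "r = r'" using uniq \<open>r \<in> R\<close> \<open>r' \<in> R\<close> by blast
  qed
  have orth: "\<beta> r \<bullet> \<beta> r' = 0" if "r \<in> R" "r' \<in> R" "r \<noteq> r'" for r r'
  proof -
    have "\<beta> r $ j * \<beta> r' $ j = 0" for j
      using uniq[OF that(1,2), of j] that(3) by (auto simp: \<beta>_def)
    then have "(\<Sum>j\<in>UNIV. \<beta> r $ j * \<beta> r' $ j) = 0" by (intro sum.neutral) blast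
    then show ?thesis by (simp add: inner_vec_def)
  qed
  have indep: "independent (\<beta> ` R)"
  proof (rule pairwise_orthogonal_independent)
    show "pairwise orthogonal (\<beta> ` R)"
      unfolding pairwise_def orthogonal_def by (auto intro: orth)
    have "\<beta> r \<noteq> 0" for r
    proof -
      have "\<beta> r $ r = 1" by (simp add: \<beta>_def)
      then show ?thesis by auto
    qed
    then show "0 \<notin> \<beta> ` R" by auto
  qed
  have span: "S \<subseteq> span (\<beta> ` R)"
  proof
    fix x assume x: "x \<in> S"
    have "x = (\<Sum>r\<in>R. x $ r *\<^sub>R \<beta> r)"
    proof (subst vec_eq_iff, rule allI)
      fix j
      obtain r0 where r0: "r0 \<in> R" "j = r0 \<or> j = \<tau> r0" using ex by blast
      have "(\<Sum>r\<in>R. x $ r *\<^sub>R \<beta> r) $ j = (\<Sum>r\<in>R. if r = r0 then x $ r0 else 0)"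
        unfolding sum_component
      proof (rule sum.cong[OF refl])
        fix r assume r: "r \<in> R"
        show "(x $ r *\<^sub>R \<beta> r) $ j = (if r = r0 then x $ r0 else 0)"
        proof (cases "r = r0")
          case True then show ?thesis using r0(2) by (auto simp: \<beta>_def)
        next
          case False
          then have "\<not> (j = r \<or> j = \<tau> r)" using uniq[OF r r0(1), of j] r0(2) by blast
          then show ?thesis using False by (simp add: \<beta>_def)
        qed
      qed
      also have "\<dots> = x $ r0" using r0(1) by simp
      also have "\<dots> = x $ j" using r0(2) x unfolding S_def by auto
      finally show "x $ j = (\<Sum>r\<in>R. x $ r *\<^sub>R \<beta> r) $ j" by simp
    qed
    also have "\<dots> \<in> span (\<beta> ` R)"
      by (intro span_sum span_scale span_base) auto
    finally show "x \<in> span (\<beta> ` R)" .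
  qed
  have dimS: "dim S = card R"
    using dim_unique[OF BS span indep] card_image[OF binj] by simp
  have un: "R \<union> \<tau> ` R = UNIV"
  proof -
    have "j \<in> R \<union> \<tau> ` R" for j using ex[of j] by auto
    then show ?thesis by auto
  qed
  have int: "R \<inter> \<tau> ` R = {i. \<tau> i = i}"
  proof
    show "R \<inter> \<tau> ` R \<subseteq> {i. \<tau> i = i}"
    proof
      fix i assume "i \<in> R \<inter> \<tau> ` R"
      then obtain r where "r \<in> R" "i = \<tau> r" "i \<in> R" by auto
      then have "r = i" using uniq[of i r i] by auto
      then show "i \<in> {i. \<tau> i = i}" using \<open>i = \<tau> r\<close> by simp
    qed
    show "{i. \<tau> i = i} \<subseteq> R \<inter> \<tau> ` R"
    proof
      fix i assume "i \<in> {i. \<tau> i = i}"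
      then have ti: "\<tau> i = i" by simp
      then have iR: "i \<in> R" by (simp add: R_def)
      have "i \<in> \<tau> ` R" using image_eqI[of i \<tau> i R] ti iR by simp
      then show "i \<in> R \<inter> \<tau> ` R" using iR by simp
    qed
  qed
  have tinj: "inj_on \<tau> R" by (metis inv inj_on_inverseI)
  have "card R + card (\<tau> ` R) = card (R \<union> \<tau> ` R) + card (R \<inter> \<tau> ` R)"
    by (rule card_Un_Int) auto
  then have "2 * card R = CARD('i) + card {i. \<tau> i = i}"
    using un int card_image[OF tinj] by simp
  then show ?thesis using dimS S_def by simp
qed


definition tsig :: "'l::enum \<Rightarrow> 'l" where
  "tsig k = slice_idx ((CARD('l) - slice_pos k) mod CARD('l))"

lemma modN: "s < L \<Longrightarrow> (L - (L - s) mod L) mod L = (s::nat)"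
  by (cases "s = 0") (simp_all add: mod2)

lemma modF: "s < L \<Longrightarrow> ((L - s) mod L = s) = (s = 0 \<or> 2 * s = (L::nat))"
  by (cases "s = 0") (auto simp: mod2)

lemma sp_tsig: "slice_pos (tsig k) = (CARD('l) - slice_pos k) mod CARD('l)" for k :: "'l::enum"
  unfolding tsig_def by (rule sp_si) simp

lemma tsig_tsig[simp]: "tsig (tsig k) = k" for k :: "'l::enum"
proof -
  have "slice_pos (tsig (tsig k)) = slice_pos k"
    unfolding sp_tsig using modN[OF sp_lt[of k]] by simp
  then show ?thesis by (metis si_sp)
qed

lemma tsig_fix: "(tsig k = k) = (slice_pos k = 0 \<or> 2 * slice_pos k = CARD('l))" for k :: "'l::enum"
proof -
  have "(tsig k = k) = (slice_pos (tsig k) = slice_pos k)" by (metis si_sp)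
  also have "\<dots> = (slice_pos k = 0 \<or> 2 * slice_pos k = CARD('l))"
    unfolding sp_tsig by (rule modF[OF sp_lt])
  finally show ?thesis .
qed

lemma card_tsig_fix: "card {k::'l::enum. tsig k = k} = (if even CARD('l) then 2 else 1)"
proof -
  let ?L = "CARD('l)"
  have inj: "inj (slice_pos :: 'l \<Rightarrow> nat)" by (metis injI si_sp)
  have "slice_pos ` {k::'l. tsig k = k} = {s. s < ?L \<and> (s = 0 \<or> 2 * s = ?L)}"
  proof
    show "slice_pos ` {k::'l. tsig k = k} \<subseteq> {s. s < ?L \<and> (s = 0 \<or> 2 * s = ?L)}"
    proof
      fix s assume "s \<in> slice_pos ` {k::'l. tsig k = k}"
      then obtain k :: 'l where k: "tsig k = k" "s = slice_pos k" by blast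
      have "slice_pos k = 0 \<or> 2 * slice_pos k = ?L" using k(1) tsig_fix[of k] by simp
      then show "s \<in> {s. s < ?L \<and> (s = 0 \<or> 2 * s = ?L)}" using k(2) sp_lt[of k] by simp
    qed
    show "{s. s < ?L \<and> (s = 0 \<or> 2 * s = ?L)} \<subseteq> slice_pos ` {k::'l. tsig k = k}"
    proof
      fix s assume s: "s \<in> {s. s < ?L \<and> (s = 0 \<or> 2 * s = ?L)}"
      then have e: "slice_pos (slice_idx s :: 'l) = s" by simp
      have "tsig (slice_idx s :: 'l) = slice_idx s" using s e tsig_fix[of "slice_idx s :: 'l"] by simp
      then have "slice_idx s \<in> {k::'l. tsig k = k}" by simp
      then show "s \<in> slice_pos ` {k::'l. tsig k = k}" using e by (metis image_eqI)
    qed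
  qed
  then have "card {k::'l. tsig k = k} = card {s. s < ?L \<and> (s = 0 \<or> 2 * s = ?L)}"
    using card_image[OF inj_on_subset[OF inj subset_UNIV]] by metis
  also have "\<dots> = (if even ?L then 2 else 1)"
  proof (cases "even ?L")
    case True
    then obtain q where q: "?L = 2 * q" by blast
    have "q \<noteq> 0" using q by (metis L_pos mult_0_right less_irrefl)
    then have "{s. s < ?L \<and> (s = 0 \<or> 2 * s = ?L)} = {0, q}" using q by auto
    then show ?thesis using True \<open>q \<noteq> 0\<close> by simp
  next
    case False
    then have "2 * s \<noteq> ?L" for s by presburger
    then have "{s. s < ?L \<and> (s = 0 \<or> 2 * s = ?L)} = {0}" by auto
    then show ?thesis using False by simp
  qed
  finally show ?thesis .
qed

definition ttau :: "'p \<times> 'p \<times> 'l \<Rightarrow> 'p \<times> 'p \<times> 'l::enum" where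
  "ttau i = (case i of (a,b,k) \<Rightarrow> (b,a,tsig k))"

lemma ttau_ttau: "ttau (ttau i) = i"
  by (cases i) (simp add: ttau_def)

lemma tsym_eq: "(tsym :: ('p::finite, 'p, 'l::enum) tensor set) = {x. \<forall>i. x $ ttau i = x $ i}"
proof -
  have "ttrans C = C \<longleftrightarrow> (\<forall>i. C $ ttau i = C $ i)" for C :: "('p, 'p, 'l) tensor"
  proof -
    have "ttrans C = C \<longleftrightarrow> (\<forall>b a k. ttrans C $ (b,a,k) = C $ (b,a,k))"
      by (simp add: vec_eq_iff)
    also have "\<dots> \<longleftrightarrow> (\<forall>b a k. C $ ttau (b,a,k) = C $ (b,a,k))"
      by (simp add: ttrans_def ttau_def tsig_def)
    also have "\<dots> \<longleftrightarrow> (\<forall>i. C $ ttau i = C $ i)" by auto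
    finally show ?thesis .
  qed
  then show ?thesis by (auto simp: tsym_def)
qed

lemma card_ttau_fix: "card {i::'p::finite \<times> 'p \<times> 'l::enum. ttau i = i} = CARD('p) * (if even CARD('l) then 2 else 1)"
proof -
  have "{i::'p \<times> 'p \<times> 'l. ttau i = i} = (\<lambda>(a,k). (a,a,k)) ` (UNIV \<times> {k. tsig k = k})"
  proof
    show "{i::'p \<times> 'p \<times> 'l. ttau i = i} \<subseteq> (\<lambda>(a,k). (a,a,k)) ` (UNIV \<times> {k. tsig k = k})"
    proof
      fix i :: "'p \<times> 'p \<times> 'l" assume "i \<in> {i. ttau i = i}"
      moreover obtain a b k where i: "i = (a,b,k)" by (rule prod_cases3)
      ultimately have "ttau (a,b,k) = (a,b,k)" by simp
      then have "(b, a, tsig k) = (a, b, k)" by (simp only: ttau_def prod.case)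
      then have "b = a" "tsig k = k" by (metis prod.inject)+
      then show "i \<in> (\<lambda>(a,k). (a,a,k)) ` (UNIV \<times> {k. tsig k = k})"
        using i by (intro image_eqI[of _ _ "(a,k)"]) simp_all
    qed
    show "(\<lambda>(a,k). (a,a,k)) ` (UNIV \<times> {k. tsig k = k}) \<subseteq> {i::'p \<times> 'p \<times> 'l. ttau i = i}"
      by (auto simp: ttau_def)
  qed
  moreover have "card ((\<lambda>(a::'p,k::'l). (a,a,k)) ` (UNIV \<times> {k::'l. tsig k = k})) = card ((UNIV::'p set) \<times> {k::'l. tsig k = k})"
  proof -
    have "inj_on (\<lambda>(a::'p,k::'l). (a,a,k)) (UNIV \<times> {k::'l. tsig k = k})" by (auto simp: inj_on_def)
    then show ?thesis by (rule card_image)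
  qed
  ultimately have "card {i::'p \<times> 'p \<times> 'l. ttau i = i} = card ((UNIV::'p set) \<times> {k::'l. tsig k = k})"
    by simp
  then show ?thesis by (simp add: card_cartesian_product card_tsig_fix)
qed

lemma dim_tsym: "2 * dim (tsym :: ('p::finite, 'p, 'l::enum) tensor set) =
    CARD('p) * CARD('p) * CARD('l) + CARD('p) * (if even CARD('l) then 2 else 1)"
proof -
  have "2 * dim {x::real^('p \<times> 'p \<times> 'l). \<forall>i. x $ ttau i = x $ i} = CARD('p \<times> 'p \<times> 'l) + card {i::'p \<times> 'p \<times> 'l. ttau i = i}"
    by (rule dim_involution) (rule ttau_ttau)
  then show ?thesis unfolding tsym_eq[where 'p='p and 'l='l] card_ttau_fix[where 'p='p and 'l='l]
    by (simp add: mult.assoc)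
qed


lemma sin_factor: "1 / 2 powr \<bar>sin (real L * pi / 2)\<bar> = (if even L then 1 else 1/2 :: real)"
proof (cases "even L")
  case True
  then obtain q where q: "L = 2 * q" by blast
  have "real L * pi / 2 = real q * pi" using q by simp
  then have "sin (real L * pi / 2) = 0" by simp
  then show ?thesis using True by simp
next
  case False
  then obtain q where q: "L = 2 * q + 1" using oddE by blast
  have e: "real L * pi / 2 = real q * pi + pi / 2" using q by (simp add: field_simps)
  have "sin (real L * pi / 2) = sin (real q * pi + pi / 2)" by (simp only: e)
  also have "\<dots> = cos (real q * pi)" by (simp add: sin_add)
  finally have "sin (real L * pi / 2) = cos (real q * pi)" .
  then have "\<bar>sin (real L * pi / 2)\<bar> = 1" by simp
  then show ?thesis using False by simp
qed

theorem mainTheorem1: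
  assumes "CARD('p::finite) \<le> CARD('n::finite)"
  shows "\<exists>d::nat. real d = real CARD('p) * (real CARD('n) * real CARD('l::enum)
              - real CARD('p) * real CARD('l) / 2
              - 1 / 2 powr \<bar>sin (real CARD('l) * pi / 2)\<bar>)
           \<and> embedded_submanifold (tStiefel :: ('n, 'p, 'l) tensor set) d"
proof -
  let ?T = "dim (tsym :: ('p, 'p, 'l) tensor set)"
  have emb0: "embedded_submanifold {x :: ('n, 'p, 'l) tensor. (\<lambda>x y. tprod (ttrans x) y) x x = tident}
      (CARD('n \<times> 'p \<times> 'l) - ?T)"
  proof (rule quadric_submanifold[OF bilinear_tst])
    fix x0 y :: "('n, 'p, 'l) tensor"
    assume x0: "tprod (ttrans x0) x0 = tident"
    show "\<exists>h. tprod (ttrans y) y - tident = tprod (ttrans h) x0 + tprod (ttrans x0) h"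
      using tst_surj[OF x0 tst_F_sym[of y]] by blast
  next
    fix x0 :: "('n, 'p, 'l) tensor"
    assume x0: "tprod (ttrans x0) x0 = tident"
    show "dim (range (\<lambda>h. tprod (ttrans h) x0 + tprod (ttrans x0) h)) = ?T"
      using tst_range[OF x0] by simp
  qed
  then have emb: "embedded_submanifold (tStiefel :: ('n, 'p, 'l) tensor set) (CARD('n) * CARD('p) * CARD('l) - ?T)"
    by (simp add: tStiefel_def mult.assoc)
  define n where "n = CARD('n)"
  define p where "p = CARD('p)"
  define L where "L = CARD('l)"
  define f :: nat where "f = (if even L then 2 else 1)"
  have T2: "2 * ?T = p * p * L + p * f" using dim_tsym[where 'p='p and 'l='l] by (simp add: p_def L_def f_def)
  have pn: "p \<le> n" using assms by (simp add: p_def n_def)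
  have n1: "1 \<le> n" by (simp add: n_def)
  have fL: "f \<le> L"
  proof (cases "even L")
    case True
    have "L \<noteq> 0" by (simp add: L_def)
    then have "2 \<le> L" using True by presburger
    then show ?thesis using True by (simp add: f_def)
  next
    case False then show ?thesis by (simp add: f_def L_def Suc_le_eq)
  qed
  have a1: "p * p * L \<le> n * p * L" using pn by simp
  have a2: "p * f \<le> p * L" using fL by simp
  have a3: "p * L \<le> n * p * L" using n1 by simp
  have Tle: "?T \<le> n * p * L" using T2 a1 a2 a3 by linarith
  have rT: "real ?T = (real p * real p * real L + real p * real f) / 2"
    using arg_cong[OF T2, of real] by simp
  have sf: "1 / 2 powr \<bar>sin (real L * pi / 2)\<bar> = real f / 2"
    using sin_factor[of L] by (simp add: f_def)
  have "real (n * p * L - ?T) = real p * (real n * real L - real p * real L / 2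
              - 1 / 2 powr \<bar>sin (real L * pi / 2)\<bar>)"
    unfolding sf using Tle rT by (simp add: of_nat_diff algebra_simps)
  then show ?thesis using emb unfolding n_def p_def L_def by blast
qed


end
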